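(* Let $G=(V,E)$ be a graph with a partition $(V_1,V_2)$ of $V$ such that $G[V_1]$ and $G[V_2]$ are $P_5$-free. Let $C$ be a connected component of $G[V_2]$ and let $X=V(C)\cap N(V_1)$, where $N(V_1)$ is the set of vertices having a neighbour in $V_1$. Let $F\subseteq V_2$ be a set such that $G\setminus F$ is $P_5$-free and $|F\cap V(C)|\ge|X|$. Then $F'=(F\setminus V(C))\cup X$ satisfies that $G\setminus F'$ is $P_5$-free, and $|F'|\le|F|$.
   Context: Graphs are finite, simple and undirected. A $P_5$ is a path on $5$ vertices (as a not necessarily induced subgraph); a graph is $P_5$-free if it contains no $P_5$. $G[X]$ denotes the subgraph induced by $X$, and $G\setminus F=G[V\setminus F]$. *)

theory Defs
  imports Main
begin

definition graph :: "'a set \<Rightarrow> ('a \<Rightarrow> 'a \<Rightarrow> bool) \<Rightarrow> bool" where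
  "graph V E \<longleftrightarrow> finite V \<and> (\<forall>x y. E x y \<longrightarrow> E y x) \<and> (\<forall>x. \<not> E x x)
     \<and> (\<forall>x y. E x y \<longrightarrow> x \<in> V \<and> y \<in> V)"

text \<open>The induced subgraph G[S] contains a P5 (not necessarily induced):
  five distinct vertices of S, consecutive ones adjacent.\<close>
definition has_P5 :: "('a \<Rightarrow> 'a \<Rightarrow> bool) \<Rightarrow> 'a set \<Rightarrow> bool" where
  "has_P5 E S \<longleftrightarrow> (\<exists>v1 v2 v3 v4 v5. distinct [v1, v2, v3, v4, v5]
     \<and> {v1, v2, v3, v4, v5} \<subseteq> S \<and> E v1 v2 \<and> E v2 v3 \<and> E v3 v4 \<and> E v4 v5)"

definition P5_free :: "('a \<Rightarrow> 'a \<Rightarrow> bool) \<Rightarrow> 'a set \<Rightarrow> bool" where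
  "P5_free E S \<longleftrightarrow> \<not> has_P5 E S"

definition adj_in :: "('a \<Rightarrow> 'a \<Rightarrow> bool) \<Rightarrow> 'a set \<Rightarrow> 'a \<Rightarrow> 'a \<Rightarrow> bool" where
  "adj_in E S x y \<longleftrightarrow> x \<in> S \<and> y \<in> S \<and> E x y"

definition component_of :: "('a \<Rightarrow> 'a \<Rightarrow> bool) \<Rightarrow> 'a set \<Rightarrow> 'a \<Rightarrow> 'a set" where
  "component_of E S x = {y \<in> S. (adj_in E S)\<^sup>*\<^sup>* x y}"

definition is_component :: "('a \<Rightarrow> 'a \<Rightarrow> bool) \<Rightarrow> 'a set \<Rightarrow> 'a set \<Rightarrow> bool" where
  "is_component E S C \<longleftrightarrow> (\<exists>x\<in>S. C = component_of E S x)"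

definition nbhd :: "'a set \<Rightarrow> ('a \<Rightarrow> 'a \<Rightarrow> bool) \<Rightarrow> 'a set \<Rightarrow> 'a set" where
  "nbhd V E A = {v \<in> V. \<exists>u\<in>A. E v u}"

end

theory Submission
  imports Defs
begin

theorem lemma12:
  fixes V V1 V2 C F :: "'a set" and E :: "'a \<Rightarrow> 'a \<Rightarrow> bool"
  assumes "graph V E"
    and "V1 \<union> V2 = V" and "V1 \<inter> V2 = {}"
    and "P5_free E V1" and "P5_free E V2"
    and "is_component E V2 C"
    and "F \<subseteq> V2"
    and "P5_free E (V - F)"
    and "card (F \<inter> C) \<ge> card (C \<inter> nbhd V E V1)"
  shows "P5_free E (V - ((F - C) \<union> (C \<inter> nbhd V E V1)))
      \<and> card ((F - C) \<union> (C \<inter> nbhd V E V1)) \<le> card F"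
proof
  let ?X = "C \<inter> nbhd V E V1"
  let ?S = "V - ((F - C) \<union> ?X)"
  have fin: "finite V" and sym: "\<And>x y. E x y \<Longrightarrow> E y x"
    and inV: "\<And>x y. E x y \<Longrightarrow> x \<in> V \<and> y \<in> V"
    using assms(1) unfolding graph_def by auto
  obtain x0 where x0: "x0 \<in> V2" "C = component_of E V2 x0"
    using assms(6) unfolding is_component_def by auto
  have CV2: "C \<subseteq> V2" using x0 unfolding component_of_def by auto
  have step: "w \<in> C" if "u \<in> C" "u \<notin> ?X" "E u w" for u w
  proof -
    have "w \<in> V" using inV[OF that(3)] by auto
    have "w \<notin> V1"
    proof
      assume "w \<in> V1"
      then have "u \<in> nbhd V E V1" using inV[OF that(3)] that(3) unfolding nbhd_def by auto
      with that show False by auto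
    qed
    then have w2: "w \<in> V2" using \<open>w \<in> V\<close> assms(2) by auto
    have "u \<in> V2" using that(1) CV2 by auto
    have "(adj_in E V2)\<^sup>*\<^sup>* x0 u" using that(1) x0 unfolding component_of_def by auto
    moreover have "adj_in E V2 u w" using \<open>u \<in> V2\<close> w2 that(3) unfolding adj_in_def by auto
    ultimately have "(adj_in E V2)\<^sup>*\<^sup>* x0 w" by auto
    then show ?thesis using w2 x0 unfolding component_of_def by auto
  qed
  have edge: "u \<in> C \<longleftrightarrow> w \<in> C" if "u \<in> ?S" "w \<in> ?S" "E u w" for u w
    using step[of u w] step[of w u] that sym by blast
  show "P5_free E ?S"
    unfolding P5_free_def has_P5_def
  proof clarify
    fix v1 v2 v3 v4 v5
    assume d: "distinct [v1, v2, v3, v4, v5]" and sub: "{v1, v2, v3, v4, v5} \<subseteq> ?S"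
      and e: "E v1 v2" "E v2 v3" "E v3 v4" "E v4 v5"
    have eq: "v1 \<in> C \<longleftrightarrow> v2 \<in> C" "v2 \<in> C \<longleftrightarrow> v3 \<in> C" "v3 \<in> C \<longleftrightarrow> v4 \<in> C" "v4 \<in> C \<longleftrightarrow> v5 \<in> C"
      using edge e sub by auto
    show False
    proof (cases "v1 \<in> C")
      case True
      then have "{v1, v2, v3, v4, v5} \<subseteq> V2" using eq CV2 by auto
      then show False using assms(5) d e unfolding P5_free_def has_P5_def by blast
    next
      case False
      then have "{v1, v2, v3, v4, v5} \<subseteq> V - F" using eq sub by auto
      then show False using assms(8) d e unfolding P5_free_def has_P5_def by blast
    qed
  qed
  have finF: "finite F" using assms(7) assms(2) fin finite_subset by blast
  have finX: "finite ?X" using CV2 assms(2) fin by (meson finite_Int finite_subset le_supI2)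
  have "card ((F - C) \<union> ?X) = card (F - C) + card ?X"
    by (rule card_Un_disjoint) (use finF finX in auto)
  also have "\<dots> \<le> card (F - C) + card (F \<inter> C)" using assms(9) by simp
  also have "\<dots> = card F"
    using finF by (metis card_Un_disjoint Diff_disjoint Int_Diff_Un Int_commute finite_Diff finite_Int inf.commute Un_commute add.commute Diff_Int_distrib2 disjoint_iff IntE DiffE)
  finally show "card ((F - C) \<union> ?X) \<le> card F" .
qed

end
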